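(* (1) Let $T_{ab|cd}$ be the binary 4-taxon tree with split $ab|cd$, and consider the $2$-state GM+I model on it. Then the cubic polynomials $$f_1=\det\begin{pmatrix} p_{1112} & p_{1121} & p_{1122}\\ p_{1212} & p_{1221} & p_{1222}\\ p_{2112} & p_{2121} & p_{2122}\end{pmatrix},\qquad f_2=\det\begin{pmatrix} p_{1211} & p_{1212} & p_{1221}\\ p_{2111} & p_{2112} & p_{2121}\\ p_{2211} & p_{2212} & p_{2221}\end{pmatrix}$$ are phylogenetic invariants. (These are the two $3\times 3$ minors of the flattening $F_{ab|cd}$ that involve neither $p_{1111}$ nor $p_{2222}$.) (2) More generally, let $n\ge 4$, $\kappa\ge 2$, and consider the $\kappa$-state GM+I model on an $n$-taxon tree $T$. Then for each edge $e$ of $T$, every $(\kappa+1)\times(\kappa+1)$ minor of the flattening $F_e$ of $P$ that involves none of the entries $p_{ii\dots i}$, $i\in\{1,\dots,\kappa\}$, is a phylogenetic invariant.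
   Context: An $n$-taxon tree is a tree whose $n$ leaves are labeled by taxa $a_1,\dots,a_n$ and whose internal vertices all have valence at least 3; it is binary if all internal vertices have valence 3. The $\kappa$-state GM+I (general Markov plus invariable sites) model on $T$ with edge set $E$ has parameters: $\delta\in[0,1]$; a probability vector $\pi_I\in[0,1]^\kappa$; a probability vector $\pi_{GM}$ (root distribution) at a chosen root vertex $r$; and for each edge $e=(v\to w)$ (edges directed away from $r$) a $\kappa\times\kappa$ Markov matrix $M_e$ (nonnegative entries, rows summing to 1). The joint distribution at the leaves is the $n$-dimensional $\kappa\times\dots\times\kappa$ array $P=\phi_T(\mathbf s)$ with entries $$p_{i_1\dots i_n}=\delta\,\epsilon(i_1,\dots,i_n)\pi_I(i_1)+(1-\delta)\sum_{(j_v)}\pi_{GM}(j_r)\prod_{e=(u\to w)\in E}M_e(j_u,j_w),$$ where $\epsilon(i_1,\dots,i_n)=1$ if all $i_k$ are equal and $0$ otherwise, and the sum runs over all assignments of states $j_v\in\{1,\dots,\kappa\}$ to all vertices $v$ of $T$ with $j_v=i_k$ when $v$ is the leaf labeled $a_k$. The entries are polynomials in the parameters; extend $\phi_T$ to complex parameter values by the same formulas. A phylogenetic invariant is a polynomial in the $\kappa^n$ indeterminates $p_{i_1\dots i_n}$ vanishing on $\phi_T(\mathbf s)$ for all stochastic parameters $\mathbf s$ (equivalently, on the image of the complexified map). For an edge $e$ of $T$ inducing the split of the taxa into sets $A|B$, the flattening $F_e$ is the $\kappa^{|A|}\times\kappa^{|B|}$ matrix whose rows are indexed by state assignments to taxa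 in $A$, columns by state assignments to taxa in $B$, with entry the corresponding $p_{i_1\dots i_n}$. For $T_{ab|cd}$ with indices in taxon order $a,b,c,d$, $F_{ab|cd}$ is the $4\times4$ matrix with rows indexed by $ab$-states $11,12,21,22$ and columns by $cd$-states $11,12,21,22$. *)

theory Defs
  imports "Jordan_Normal_Form.Determinant" "HOL-Library.FuncSet"
begin

text \<open>Trees are given by a finite vertex set V (type 'v), a set E of undirected edges
(two-element subsets of V), and a leaf labelling lab : {0..<n} -> leaves (taxon k is a_(k+1)).
Character states are 0..<kappa (state s+1 of the paper is s here).\<close>

definition reach :: "'v set set \<Rightarrow> 'v \<Rightarrow> 'v \<Rightarrow> bool" where
  "reach E x y \<longleftrightarrow> (x, y) \<in> {(a, b). {a, b} \<in> E}\<^sup>*"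

definition deg :: "'v set set \<Rightarrow> 'v \<Rightarrow> nat" where
  "deg E v = card {e \<in> E. v \<in> e}"

definition is_tree :: "'v set \<Rightarrow> 'v set set \<Rightarrow> bool" where
  "is_tree V E \<longleftrightarrow> finite V \<and> V \<noteq> {}
     \<and> E \<subseteq> {{u, w} | u w. u \<in> V \<and> w \<in> V \<and> u \<noteq> w}
     \<and> (\<forall>u\<in>V. \<forall>w\<in>V. reach E u w)
     \<and> card E + 1 = card V"

definition taxon_tree :: "'v set \<Rightarrow> 'v set set \<Rightarrow> (nat \<Rightarrow> 'v) \<Rightarrow> nat \<Rightarrow> bool" where
  "taxon_tree V E lab n \<longleftrightarrow> is_tree V E
     \<and> bij_betw lab {..<n} {v \<in> V. deg E v = 1}
     \<and> (\<forall>v\<in>V. deg E v \<noteq> 1 \<longrightarrow> deg E v \<ge> 3)"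

definition binary_taxon_tree :: "'v set \<Rightarrow> 'v set set \<Rightarrow> (nat \<Rightarrow> 'v) \<Rightarrow> nat \<Rightarrow> bool" where
  "binary_taxon_tree V E lab n \<longleftrightarrow> taxon_tree V E lab n
     \<and> (\<forall>v\<in>V. deg E v \<noteq> 1 \<longrightarrow> deg E v = 3)"

text \<open>Orientation of edge e away from root r: parent endpoint lies on r's side of e.\<close>
definition par :: "'v set set \<Rightarrow> 'v \<Rightarrow> 'v set \<Rightarrow> 'v" where
  "par E r e = (THE u. u \<in> e \<and> reach (E - {e}) r u)"

definition chi :: "'v set set \<Rightarrow> 'v \<Rightarrow> 'v set \<Rightarrow> 'v" where
  "chi E r e = (THE w. w \<in> e \<and> \<not> reach (E - {e}) r w)"

definition side :: "'v set set \<Rightarrow> (nat \<Rightarrow> 'v) \<Rightarrow> nat \<Rightarrow> 'v set \<Rightarrow> 'v \<Rightarrow> nat set" where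
  "side E lab n e v = {k. k < n \<and> reach (E - {e}) v (lab k)}"

definition prob_vec :: "nat \<Rightarrow> (nat \<Rightarrow> real) \<Rightarrow> bool" where
  "prob_vec \<kappa> p \<longleftrightarrow> (\<forall>s<\<kappa>. p s \<ge> 0) \<and> (\<Sum>s<\<kappa>. p s) = 1"

definition markov :: "nat \<Rightarrow> (nat \<Rightarrow> nat \<Rightarrow> real) \<Rightarrow> bool" where
  "markov \<kappa> M \<longleftrightarrow> (\<forall>x<\<kappa>. prob_vec \<kappa> (M x))"

definition stoch_params ::
  "'v set set \<Rightarrow> nat \<Rightarrow> real \<Rightarrow> (nat \<Rightarrow> real) \<Rightarrow> (nat \<Rightarrow> real) \<Rightarrow> ('v set \<Rightarrow> nat \<Rightarrow> nat \<Rightarrow> real) \<Rightarrow> bool" where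
  "stoch_params E \<kappa> \<delta> \<pi>I \<pi>G M \<longleftrightarrow> 0 \<le> \<delta> \<and> \<delta> \<le> 1 \<and> prob_vec \<kappa> \<pi>I \<and> prob_vec \<kappa> \<pi>G
     \<and> (\<forall>e\<in>E. markov \<kappa> (M e))"

definition GMI_dist ::
  "'v set \<Rightarrow> 'v set set \<Rightarrow> (nat \<Rightarrow> 'v) \<Rightarrow> nat \<Rightarrow> nat \<Rightarrow> 'v \<Rightarrow> real \<Rightarrow> (nat \<Rightarrow> real)
    \<Rightarrow> (nat \<Rightarrow> real) \<Rightarrow> ('v set \<Rightarrow> nat \<Rightarrow> nat \<Rightarrow> real) \<Rightarrow> nat list \<Rightarrow> real" where
  "GMI_dist V E lab n \<kappa> r \<delta> \<pi>I \<pi>G M i =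
     \<delta> * (if (\<forall>k<n. i ! k = i ! 0) then \<pi>I (i ! 0) else 0)
     + (1 - \<delta>) * (\<Sum>j \<in> {j \<in> V \<rightarrow>\<^sub>E {..<\<kappa>}. \<forall>k<n. j (lab k) = i ! k}.
           \<pi>G (j r) * (\<Prod>e\<in>E. M e (j (par E r e)) (j (chi E r e))))"

definition phylo_invariant ::
  "'v set \<Rightarrow> 'v set set \<Rightarrow> (nat \<Rightarrow> 'v) \<Rightarrow> nat \<Rightarrow> nat \<Rightarrow> ((nat list \<Rightarrow> real) \<Rightarrow> real) \<Rightarrow> bool" where
  "phylo_invariant V E lab n \<kappa> f \<longleftrightarrow>
     (\<forall>r\<in>V. \<forall>\<delta> \<pi>I \<pi>G M. stoch_params E \<kappa> \<delta> \<pi>I \<pi>G M \<longrightarrow>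
        f (GMI_dist V E lab n \<kappa> r \<delta> \<pi>I \<pi>G M) = 0)"

definition flat_idx :: "nat \<Rightarrow> nat set \<Rightarrow> (nat \<Rightarrow> nat) \<Rightarrow> (nat \<Rightarrow> nat) \<Rightarrow> nat list" where
  "flat_idx n A a b = map (\<lambda>k. if k \<in> A then a k else b k) [0..<n]"

definition flat_minor :: "nat \<Rightarrow> nat set \<Rightarrow> (nat \<Rightarrow> nat) list \<Rightarrow> (nat \<Rightarrow> nat) list
    \<Rightarrow> (nat list \<Rightarrow> real) \<Rightarrow> real" where
  "flat_minor n A rs cs P =
     det (mat (length rs) (length cs) (\<lambda>(x, y). P (flat_idx n A (rs ! x) (cs ! y))))"

end

theory Submission
  imports Defs
begin


lemma det_low_rank:
  fixes L R :: "nat \<Rightarrow> nat \<Rightarrow> real" and k :: nat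
  shows "det (mat (Suc k) (Suc k) (\<lambda>(x,y). \<Sum>s<k. L x s * R s y)) = 0"
proof -
  define A where "A = mat (Suc k) (Suc k) (\<lambda>(i,s). if s < k then L i s else 0)"
  define B where "B = mat (Suc k) (Suc k) (\<lambda>(s,j). if s < k then R s j else 0)"
  have AB: "mat (Suc k) (Suc k) (\<lambda>(x,y). \<Sum>s<k. L x s * R s y) = A * B"
  proof (rule eq_matI)
    fix i j assume i: "i < dim_row (A * B)" and j: "j < dim_col (A * B)"
    have "(A * B) $$ (i, j) = (\<Sum>s<Suc k. (if s < k then L i s else 0) * (if s < k then R s j else 0))"
      using i j by (simp add: A_def B_def scalar_prod_def atLeast0LessThan)
    also have "\<dots> = (\<Sum>s<k. L i s * R s j)" by simp
    finally show "mat (Suc k) (Suc k) (\<lambda>(x,y). \<Sum>s<k. L x s * R s y) $$ (i, j) = (A * B) $$ (i, j)"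
      using i j by (simp add: A_def B_def)
  qed (auto simp: A_def B_def)
  have dA: "det A = 0"
  proof -
    have Ac: "A \<in> carrier_mat (Suc k) (Suc k)" by (simp add: A_def)
    have "det A = (\<Sum> p | p permutes {0 ..< Suc k}. signof p * (\<Prod>j<Suc k. A $$ (p j, j)))"
      by (rule det_col[OF Ac])
    also have "\<dots> = 0"
    proof (rule sum.neutral, intro ballI)
      fix p assume "p \<in> {p. p permutes {0..<Suc k}}"
      hence "p k < Suc k" by (auto dest: permutes_in_image)
      hence "A $$ (p k, k) = 0" by (simp add: A_def)
      hence "(\<Prod>j<Suc k. A $$ (p j, j)) = 0" by (intro prod_zero) auto
      thus "signof p * (\<Prod>j<Suc k. A $$ (p j, j)) = 0" by simp
    qed
    finally show ?thesis .
  qed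
  have "det (A * B) = det A * det B" by (rule det_mult[of _ "Suc k"]) (simp_all add: A_def B_def)
  thus ?thesis unfolding AB using dA by simp
qed


lemma reach_refl[simp]: "reach E x x"
  by (simp add: reach_def)

lemma reach_step: "reach E x y \<Longrightarrow> {y, z} \<in> E \<Longrightarrow> reach E x z"
  unfolding reach_def by (rule rtrancl_into_rtrancl) auto

lemma reach_trans: "reach E x y \<Longrightarrow> reach E y z \<Longrightarrow> reach E x z"
  unfolding reach_def by (rule rtrancl_trans)

lemma reach_sym: assumes "reach E x y" shows "reach E y x"
proof -
  have s: "sym {(a, b). {a, b} \<in> E}" by (auto simp: sym_def insert_commute)
  show ?thesis using assms unfolding reach_def
    using sym_rtrancl[OF s] by (auto simp: sym_def)
qed

lemma reach_mono: assumes "E \<subseteq> F" "reach E x y" shows "reach F x y"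
proof -
  have "{(a, b). {a, b} \<in> E} \<subseteq> {(a, b). {a, b} \<in> F}" using assms(1) by auto
  thus ?thesis using assms(2) unfolding reach_def using rtrancl_mono by blast
qed

lemma reach_empty: "reach {} x y \<Longrightarrow> x = y"
  unfolding reach_def by (auto elim: rtranclE)

lemma reach_insert:
  assumes "reach (insert {a, b} F) x y"
  shows "reach F x y \<or> ((reach F x a \<or> reach F x b) \<and> (reach F y a \<or> reach F y b))"
proof -
  have "(x, y) \<in> {(u, w). {u, w} \<in> insert {a, b} F}\<^sup>*" using assms by (simp add: reach_def)
  thus ?thesis
  proof (induction rule: rtrancl_induct)
    case base thus ?case by simp
  next
    case (step y z)
    have yz: "{y, z} = {a, b} \<or> {y, z} \<in> F" using step.hyps(2) by simp
    show ?case
    proof (cases "{y, z} = {a, b}")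
      case True
      have z: "z = a \<or> z = b" using True by (metis insertCI insertE singletonD)
      have y: "y = a \<or> y = b" using True by (metis insertCI insertE singletonD)
      have 1: "reach F z a \<or> reach F z b" using z by (metis reach_refl)
      have 2: "reach F x a \<or> reach F x b" using step.IH y by metis
      show ?thesis using 1 2 by simp
    next
      case False
      hence F: "{y, z} \<in> F" using yz by simp
      have Fs: "{z, y} \<in> F" using F by (simp add: insert_commute)
      from step.IH show ?thesis
      proof
        assume "reach F x y" thus ?thesis using reach_step[OF _ F] by simp
      next
        assume h: "(reach F x a \<or> reach F x b) \<and> (reach F y a \<or> reach F y b)"
        have zy: "reach F z y" using reach_step[OF reach_refl Fs] .
        have "reach F z a \<or> reach F z b" using h zy reach_trans by metis
        thus ?thesis using h by simp
      qed
    qed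
  qed
qed

lemma card_components:
  assumes "finite F" "finite V" "\<forall>g\<in>F. \<exists>a b. g = {a, b} \<and> a \<in> V \<and> b \<in> V"
  shows "card V \<le> card F + card ((\<lambda>x. {y\<in>V. reach F x y}) ` V)"
  using assms
proof (induction F rule: finite_induct)
  case empty
  have "(\<lambda>x. {y\<in>V. reach {} x y}) ` V = (\<lambda>x. {x}) ` V"
    by (rule image_cong) (auto dest: reach_empty)
  moreover have "card ((\<lambda>x. {x}) ` V) = card V" by (rule card_image) (auto simp: inj_on_def)
  ultimately show ?case by simp
next
  case (insert g F)
  obtain a b where g: "g = {a, b}" and ab: "a \<in> V" "b \<in> V" using insert.prems by auto
  define C where "C = (\<lambda>x. {y\<in>V. reach F x y})"
  define C' where "C' = (\<lambda>x. {y\<in>V. reach (insert g F) x y})"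
  define \<psi> where "\<psi> = (\<lambda>X. {y\<in>V. \<exists>x\<in>X. reach (insert g F) x y})"
  have pF: "\<forall>g\<in>F. \<exists>a b. g = {a, b} \<and> a \<in> V \<and> b \<in> V" using insert.prems(2) by blast
  have IH: "card V \<le> card F + card (C ` V)" using insert.IH[OF insert.prems(1) pF] by (simp add: C_def)
  have Cx: "C x = C y" if "reach F x y" for x y
  proof -
    have yx: "reach F y x" using that by (rule reach_sym)
    have "reach F x z \<longleftrightarrow> reach F y z" for z using that yx reach_trans by metis
    thus ?thesis unfolding C_def by simp
  qed
  have psi: "\<psi> (C x) = C' x" if "x \<in> V" for x
  proof
    show "\<psi> (C x) \<subseteq> C' x"
    proof
      fix y assume "y \<in> \<psi> (C x)"
      then obtain z where y: "y \<in> V" and z: "reach F x z" "reach (insert g F) z y"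
        unfolding \<psi>_def C_def by blast
      have "reach (insert g F) x z" by (rule reach_mono[OF _ z(1)]) auto
      hence "reach (insert g F) x y" using z(2) by (rule reach_trans)
      thus "y \<in> C' x" using y by (simp add: C'_def)
    qed
    show "C' x \<subseteq> \<psi> (C x)" unfolding \<psi>_def C_def C'_def using that reach_refl by auto
  qed
  have inj: "inj_on \<psi> (C ` V - {C a})"
  proof (rule inj_onI)
    fix X Y assume X: "X \<in> C ` V - {C a}" and Y: "Y \<in> C ` V - {C a}" and eq: "\<psi> X = \<psi> Y"
    obtain x where x: "x \<in> V" "X = C x" using X by auto
    obtain y where y: "y \<in> V" "Y = C y" using Y by auto
    have "C' x = C' y" using eq psi[OF x(1)] psi[OF y(1)] x(2) y(2) by simp
    moreover have "y \<in> C' y" using y(1) by (simp add: C'_def)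
    ultimately have "y \<in> C' x" by simp
    hence "reach (insert {a, b} F) x y" by (simp add: C'_def g)
    from reach_insert[OF this]
    have rxy: "reach F x y"
    proof
      assume h: "(reach F x a \<or> reach F x b) \<and> (reach F y a \<or> reach F y b)"
      have "\<not> reach F x a" using Cx[of x a] x X by blast
      moreover have "\<not> reach F y a" using Cx[of y a] y Y by blast
      ultimately show ?thesis using h by (meson reach_trans reach_sym)
    qed
    show "X = Y" using Cx[OF rxy] x y by simp
  qed
  have fin: "finite (C ` V)" using insert.prems by simp
  have "card (C ` V) \<le> card (C ` V - {C a}) + 1"
    by (simp add: card_Diff_singleton_if) linarith
  also have "card (C ` V - {C a}) = card (\<psi> ` (C ` V - {C a}))" using card_image[OF inj] by simp
  also have "\<dots> \<le> card (C' ` V)"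
  proof (rule card_mono)
    show "finite (C' ` V)" using insert.prems by simp
    show "\<psi> ` (C ` V - {C a}) \<subseteq> C' ` V" using psi by auto
  qed
  finally have "card (C ` V) \<le> card (C' ` V) + 1" by simp
  thus ?case using IH insert.hyps by (simp add: C'_def)
qed

lemma card_connected:
  assumes "finite F" "finite V" "V \<noteq> {}" "\<forall>g\<in>F. \<exists>a b. g = {a, b} \<and> a \<in> V \<and> b \<in> V"
    and "\<forall>u\<in>V. \<forall>w\<in>V. reach F u w"
  shows "card V \<le> card F + 1"
proof -
  have "(\<lambda>x. {y\<in>V. reach F x y}) ` V = {V}" using assms(3,5) by auto
  thus ?thesis using card_components[OF assms(1,2,4)] by simp
qed

lemma tree_edges:
  assumes "is_tree V E"
  shows "finite E" "\<forall>g\<in>E. \<exists>a b. g = {a, b} \<and> a \<in> V \<and> b \<in> V \<and> a \<noteq> b"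
proof -
  have "E \<subseteq> Pow V" using assms unfolding is_tree_def by auto
  thus "finite E" using assms unfolding is_tree_def by (meson finite_Pow_iff finite_subset)
  show "\<forall>g\<in>E. \<exists>a b. g = {a, b} \<and> a \<in> V \<and> b \<in> V \<and> a \<noteq> b"
    using assms unfolding is_tree_def by blast
qed

lemma tree_not_both:
  assumes T: "is_tree V E" and f: "f \<in> E" "f = {a, b}" and r: "r \<in> V"
    and ra: "reach (E - {f}) r a" and rb: "reach (E - {f}) r b"
  shows False
proof -
  have fin: "finite V" "V \<noteq> {}" using T by (auto simp: is_tree_def)
  have allr: "reach (E - {f}) r x" if "x \<in> V" for x
  proof -
    have "reach E r x" using T r that by (auto simp: is_tree_def)
    hence "reach (insert {a, b} (E - {f})) r x" by (rule reach_mono[rotated]) (use f in auto)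
    from reach_insert[OF this] show ?thesis
      using ra rb by (meson reach_trans reach_sym)
  qed
  have conn: "\<forall>u\<in>V. \<forall>w\<in>V. reach (E - {f}) u w"
    using allr by (meson reach_trans reach_sym)
  have ed: "\<forall>g\<in>E - {f}. \<exists>a b. g = {a, b} \<and> a \<in> V \<and> b \<in> V"
    using tree_edges(2)[OF T] by blast
  have "card V \<le> card (E - {f}) + 1"
    using card_connected[OF _ fin(1) fin(2) ed conn] tree_edges(1)[OF T] by simp
  moreover have "card (E - {f}) + 1 = card E"
  proof -
    have "card E > 0" using tree_edges(1)[OF T] f by (auto simp: card_gt_0_iff)
    thus ?thesis using tree_edges(1)[OF T] f by (simp add: card_Diff_singleton)
  qed
  moreover have "card E + 1 = card V" using T by (simp add: is_tree_def)
  ultimately show False by simp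
qed

lemma tree_par_chi:
  assumes T: "is_tree V E" and f: "f \<in> E" and r: "r \<in> V"
  shows "par E r f \<in> f" "chi E r f \<in> f" "par E r f \<noteq> chi E r f"
proof -
  obtain a b where ab: "f = {a, b}" "a \<in> V" "b \<in> V" "a \<noteq> b" using tree_edges(2)[OF T] f by blast
  have "reach E r a" using T r ab by (auto simp: is_tree_def)
  hence "reach (insert {a, b} (E - {f})) r a" by (rule reach_mono[rotated]) (use f ab in auto)
  from reach_insert[OF this] have ex: "reach (E - {f}) r a \<or> reach (E - {f}) r b" by auto
  have nb: "\<not> (reach (E - {f}) r a \<and> reach (E - {f}) r b)"
    using tree_not_both[OF T f ab(1) r] by blast
  have "par E r f \<in> f \<and> chi E r f \<in> f \<and> par E r f \<noteq> chi E r f"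
  proof (cases "reach (E - {f}) r a")
    case True
    hence nb': "\<not> reach (E - {f}) r b" using nb by blast
    have p: "par E r f = a" unfolding par_def
      by (rule the_equality) (use True nb' ab in auto)
    have c: "chi E r f = b" unfolding chi_def
      by (rule the_equality) (use True nb' ab in auto)
    show ?thesis using p c ab by auto
  next
    case False
    hence nb': "reach (E - {f}) r b" using ex by blast
    have p: "par E r f = b" unfolding par_def
      by (rule the_equality) (use False nb' ab in auto)
    have c: "chi E r f = a" unfolding chi_def
      by (rule the_equality) (use False nb' ab in auto)
    show ?thesis using p c ab by auto
  qed
  thus "par E r f \<in> f" "chi E r f \<in> f" "par E r f \<noteq> chi E r f" by auto
qed



lemma part2:
  fixes V :: "'w set" and E :: "'w set set" and lab :: "nat \<Rightarrow> 'w" and n \<kappa> :: nat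
    and e :: "'w set" and v :: 'w and rs cs :: "(nat \<Rightarrow> nat) list"
  assumes k2: "\<kappa> \<ge> 2" and TT: "taxon_tree V E lab n" and eE: "e \<in> E" and ve: "v \<in> e"
    and lrs: "length rs = \<kappa> + 1" and srs: "set rs \<subseteq> side E lab n e v \<rightarrow>\<^sub>E {..<\<kappa>}"
    and lcs: "length cs = \<kappa> + 1" and dcs: "distinct cs"
    and scs: "set cs \<subseteq> ({..<n} - side E lab n e v) \<rightarrow>\<^sub>E {..<\<kappa>}"
    and nd: "\<forall>x<\<kappa>+1. \<forall>y<\<kappa>+1. \<forall>s.
            flat_idx n (side E lab n e v) (rs ! x) (cs ! y) \<noteq> replicate n s"
  shows "phylo_invariant V E lab n \<kappa> (flat_minor n (side E lab n e v) rs cs)"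
proof -
  have T: "is_tree V E" using TT by (simp add: taxon_tree_def)
  have labV: "lab k \<in> V" if "k < n" for k using TT that unfolding taxon_tree_def bij_betw_def by auto
  obtain a0 b0 where ab0: "e = {a0, b0}" "a0 \<in> V" "b0 \<in> V" "a0 \<noteq> b0"
    using tree_edges(2)[OF T] eE by blast
  obtain w where e: "e = {v, w}" and vw: "v \<noteq> w" and vV: "v \<in> V" and wV: "w \<in> V"
  proof (cases "v = a0")
    case True thus ?thesis using that ab0 by blast
  next
    case False hence "v = b0" using ve ab0 by auto
    thus ?thesis using that ab0 by (auto simp: insert_commute)
  qed
  define C where "C = {x\<in>V. reach (E - {e}) v x}"
  define D where "D = V - C"
  define A where "A = side E lab n e v"
  have A_eq: "A = {k. k < n \<and> lab k \<in> C}" using labV by (auto simp: A_def side_def C_def)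
  have vC: "v \<in> C" using vV by (simp add: C_def)
  have Esub: "E \<subseteq> insert {v, w} (E - {e})" using e by auto
  have wD: "w \<notin> C"
  proof
    assume "w \<in> C"
    hence rw: "reach (E - {e}) v w" by (simp add: C_def)
    have all: "reach (E - {e}) v x" if "x \<in> V" for x
    proof -
      have "reach E v x" using T vV that by (simp add: is_tree_def)
      hence "reach (insert {v, w} (E - {e})) v x" using reach_mono[OF Esub] by blast
      from reach_insert[OF this] show ?thesis using rw by (meson reach_trans reach_sym reach_refl)
    qed
    have "A = {..<n}" using all labV by (auto simp: A_def side_def)
    hence "set cs \<subseteq> {} \<rightarrow>\<^sub>E {..<\<kappa>}" using scs by (simp add: A_def)
    hence "set cs \<subseteq> {\<lambda>x. undefined}" by simp
    hence "card (set cs) \<le> card {\<lambda>x::nat. undefined::nat}" by (rule card_mono[rotated]) auto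
    moreover have "card (set cs) = \<kappa> + 1" using dcs lcs by (simp add: distinct_card)
    ultimately show False using k2 by simp
  qed
  have wDD: "w \<in> D" using wV wD by (simp add: D_def)
  have edge_split: "f \<subseteq> C \<or> f \<subseteq> D" if "f \<in> E - {e}" for f
  proof -
    have fE: "f \<in> E" using that by simp
    obtain a b where ab: "f = {a, b}" "a \<in> V" "b \<in> V" using bspec[OF tree_edges(2)[OF T] fE] by blast
    have fab: "{a, b} \<in> E - {e}" "{b, a} \<in> E - {e}" using that ab by (auto simp: insert_commute)
    have 1: "reach (E - {e}) v b" if "reach (E - {e}) v a" using reach_step[OF that fab(1)] .
    have 2: "reach (E - {e}) v a" if "reach (E - {e}) v b" using reach_step[OF that fab(2)] .
    have "a \<in> C \<longleftrightarrow> b \<in> C" using 1 2 ab unfolding C_def by blast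
    thus ?thesis using ab unfolding D_def by blast
  qed
  have fne: "f \<noteq> {}" if "f \<in> E" for f using bspec[OF tree_edges(2)[OF T] that] by blast
  have finV: "finite V" using T by (simp add: is_tree_def)
  have finE: "finite E" using tree_edges(1)[OF T] .
  have finC: "finite C" "finite D" using finV by (auto simp: C_def D_def)
  show ?thesis unfolding phylo_invariant_def
  proof (intro ballI allI impI)
    fix r \<delta> \<pi>I \<pi>G M
    assume r: "r \<in> V" and sp: "stoch_params E \<kappa> \<delta> \<pi>I \<pi>G M"
    define P where "P = GMI_dist V E lab n \<kappa> r \<delta> \<pi>I \<pi>G M"
    define EC where "EC = {f \<in> E - {e}. f \<subseteq> C}"
    define ED where "ED = {f \<in> E - {e}. f \<subseteq> D}"
    define merge where "merge = (\<lambda>(p::'w \<Rightarrow> nat) q z. if z \<in> C then p z else q z)"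
    define FC where "FC = (\<lambda>p. (if r \<in> C then \<pi>G (p r) else 1) *
        (\<Prod>f\<in>EC. M f (p (par E r f)) (p (chi E r f))))"
    define FD where "FD = (\<lambda>q. (if r \<in> C then 1 else \<pi>G (q r)) *
        (\<Prod>f\<in>ED. M f (q (par E r f)) (q (chi E r f))))"
    define K where "K = (\<lambda>s t. if par E r e = v then M e s t else M e t s)"
    define W where "W = (\<lambda>j. \<pi>G (j r) * (\<Prod>f\<in>E. M f (j (par E r f)) (j (chi E r f))))"
    have factor: "W (merge p q) = FC p * K (p v) (q w) * FD q" for p q
    proof -
      have Eeq: "E = insert e (EC \<union> ED)" using edge_split eE by (auto simp: EC_def ED_def)
      have finEC: "finite EC" "finite ED" using finE by (auto simp: EC_def ED_def)
      have disj: "EC \<inter> ED = {}" using fne by (auto simp: EC_def ED_def D_def)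
      have eN: "e \<notin> EC \<union> ED" by (simp add: EC_def ED_def)
      define g where "g = (\<lambda>f. M f (merge p q (par E r f)) (merge p q (chi E r f)))"
      have "(\<Prod>f\<in>E. g f) = g e * ((\<Prod>f\<in>EC. g f) * (\<Prod>f\<in>ED. g f))"
        unfolding Eeq using finEC disj eN by (simp add: prod.union_disjoint)
      moreover have "(\<Prod>f\<in>EC. g f) = (\<Prod>f\<in>EC. M f (p (par E r f)) (p (chi E r f)))"
      proof (rule prod.cong[OF refl])
        fix f assume f: "f \<in> EC"
        hence "par E r f \<in> C" "chi E r f \<in> C" using tree_par_chi[OF T _ r, of f] by (auto simp: EC_def)
        thus "g f = M f (p (par E r f)) (p (chi E r f))" by (simp add: g_def merge_def)
      qed
      moreover have "(\<Prod>f\<in>ED. g f) = (\<Prod>f\<in>ED. M f (q (par E r f)) (q (chi E r f)))"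
      proof (rule prod.cong[OF refl])
        fix f assume f: "f \<in> ED"
        hence "par E r f \<in> D" "chi E r f \<in> D" using tree_par_chi[OF T _ r, of f] by (auto simp: ED_def)
        thus "g f = M f (q (par E r f)) (q (chi E r f))" by (simp add: g_def merge_def D_def)
      qed
      moreover have "g e = K (p v) (q w)"
      proof -
        have pc: "par E r e \<in> {v, w}" "chi E r e \<in> {v, w}" "par E r e \<noteq> chi E r e"
          using tree_par_chi[OF T eE r] e by auto
        show ?thesis
        proof (cases "par E r e = v")
          case True
          hence "chi E r e = w" using pc by auto
          thus ?thesis using True vC wD by (simp add: g_def K_def merge_def)
        next
          case False
          hence "par E r e = w" "chi E r e = v" using pc by auto
          thus ?thesis using False vC wD by (simp add: g_def K_def merge_def)
        qed
      qed
      moreover have "\<pi>G (merge p q r) = (if r \<in> C then \<pi>G (p r) else 1) * (if r \<in> C then 1 else \<pi>G (q r))"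
        by (simp add: merge_def)
      ultimately show ?thesis unfolding W_def FC_def FD_def g_def[symmetric] by (simp add: ac_simps)
    qed
    define JC where "JC = (\<lambda>a. {p \<in> C \<rightarrow>\<^sub>E {..<\<kappa>}. \<forall>k<n. k \<in> A \<longrightarrow> p (lab k) = a k})"
    define JD where "JD = (\<lambda>b. {q \<in> D \<rightarrow>\<^sub>E {..<\<kappa>}. \<forall>k<n. k \<notin> A \<longrightarrow> q (lab k) = b k})"
    define Lf where "Lf = (\<lambda>x s. (1 - \<delta>) * (\<Sum>p\<in>{p \<in> JC (rs ! x). p v = s}. FC p))"
    define Rf where "Rf = (\<lambda>s y. \<Sum>q\<in>JD (cs ! y). K s (q w) * FD q)"
    have sumfac: "(\<Sum>j\<in>{j \<in> V \<rightarrow>\<^sub>E {..<\<kappa>}. \<forall>k<n. j (lab k) = (if k \<in> A then a k else b k)}. W j)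
       = (\<Sum>s<\<kappa>. (\<Sum>p\<in>{p \<in> JC a. p v = s}. FC p) * (\<Sum>q\<in>JD b. K s (q w) * FD q))" for a b
    proof -
      have finJC: "finite (JC a)" "finite (JD b)" using finC by (auto simp: JC_def JD_def finite_PiE)
      have "(\<Sum>j\<in>{j \<in> V \<rightarrow>\<^sub>E {..<\<kappa>}. \<forall>k<n. j (lab k) = (if k \<in> A then a k else b k)}. W j)
          = (\<Sum>(p, q)\<in>JC a \<times> JD b. FC p * K (p v) (q w) * FD q)"
      proof (rule sum.reindex_bij_witness[where j = "\<lambda>j. (restrict j C, restrict j D)"
            and i = "\<lambda>(p, q). merge p q"])
        have CV: "C \<subseteq> V" by (auto simp: C_def)
        have labA: "lab k \<in> C" if "k < n" "k \<in> A" for k using that A_eq by simp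
        have labD: "lab k \<in> D" if "k < n" "k \<notin> A" for k using that A_eq labV by (simp add: D_def)
        have mr: "merge (restrict j C) (restrict j D) = j" if j: "j \<in> V \<rightarrow>\<^sub>E {..<\<kappa>}" for j
        proof
          fix z show "merge (restrict j C) (restrict j D) z = j z"
          proof (cases "z \<in> C")
            case True thus ?thesis by (simp add: merge_def)
          next
            case False
            show ?thesis
            proof (cases "z \<in> V")
              case True thus ?thesis using False by (simp add: merge_def D_def)
            next
              case nV: False
              have "j z = undefined" using j nV by (rule PiE_arb)
              thus ?thesis using False nV by (simp add: merge_def D_def)
            qed
          qed
        qed
        fix j assume j: "j \<in> {j \<in> V \<rightarrow>\<^sub>E {..<\<kappa>}. \<forall>k<n. j (lab k) = (if k \<in> A then a k else b k)}"
        show "(case (restrict j C, restrict j D) of (p, q) \<Rightarrow> merge p q) = j" using mr j by simp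
        show "(restrict j C, restrict j D) \<in> JC a \<times> JD b"
        proof -
          have j1: "j \<in> V \<rightarrow>\<^sub>E {..<\<kappa>}" and j2: "\<forall>k<n. j (lab k) = (if k \<in> A then a k else b k)"
            using j by auto
          have "restrict j C \<in> C \<rightarrow>\<^sub>E {..<\<kappa>}" using j1 CV by auto
          moreover have "restrict j D \<in> D \<rightarrow>\<^sub>E {..<\<kappa>}" using j1 by (auto simp: D_def)
          moreover have "\<forall>k<n. k \<in> A \<longrightarrow> restrict j C (lab k) = a k" using j2 labA by simp
          moreover have "\<forall>k<n. k \<notin> A \<longrightarrow> restrict j D (lab k) = b k" using j2 labD by simp
          ultimately show ?thesis by (simp add: JC_def JD_def)
        qed
        show "(case (restrict j C, restrict j D) of (p, q) \<Rightarrow> FC p * K (p v) (q w) * FD q) = W j"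
          using factor[of "restrict j C" "restrict j D"] mr j by simp
      next
        have CV: "C \<subseteq> V" by (auto simp: C_def)
        have labA: "lab k \<in> C" if "k < n" "k \<in> A" for k using that A_eq by simp
        have labD: "lab k \<in> D" if "k < n" "k \<notin> A" for k using that A_eq labV by (simp add: D_def)
        fix pq assume pq: "pq \<in> JC a \<times> JD b"
        obtain p q where pq': "pq = (p, q)" "p \<in> C \<rightarrow>\<^sub>E {..<\<kappa>}" "q \<in> D \<rightarrow>\<^sub>E {..<\<kappa>}"
          "\<forall>k<n. k \<in> A \<longrightarrow> p (lab k) = a k" "\<forall>k<n. k \<notin> A \<longrightarrow> q (lab k) = b k"
          using pq by (auto simp: JC_def JD_def)
        have r1: "restrict (merge p q) C = p"
        proof
          fix z show "restrict (merge p q) C z = p z"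
          proof (cases "z \<in> C")
            case False thus ?thesis using PiE_arb[OF pq'(2) False] by simp
          qed (simp add: merge_def)
        qed
        have r2: "restrict (merge p q) D = q"
        proof
          fix z show "restrict (merge p q) D z = q z"
          proof (cases "z \<in> D")
            case False thus ?thesis using PiE_arb[OF pq'(3) False] by simp
          next
            case True thus ?thesis by (simp add: merge_def D_def)
          qed
        qed
        show "(\<lambda>j. (restrict j C, restrict j D)) ((case pq of (p, q) \<Rightarrow> merge p q)) = pq"
          using r1 r2 pq'(1) by simp
        have mV: "merge p q \<in> V \<rightarrow>\<^sub>E {..<\<kappa>}"
        proof (rule PiE_I)
          fix z assume "z \<in> V" thus "merge p q z \<in> {..<\<kappa>}" using pq'(2,3)
            by (auto simp: merge_def D_def)
        next
          fix z assume zV: "z \<notin> V"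
          hence "z \<notin> D" "z \<notin> C" using CV by (auto simp: D_def)
          thus "merge p q z = undefined" using PiE_arb[OF pq'(3)] by (simp add: merge_def)
        qed
        have "\<forall>k<n. merge p q (lab k) = (if k \<in> A then a k else b k)"
        proof (intro allI impI)
          fix k assume k: "k < n"
          show "merge p q (lab k) = (if k \<in> A then a k else b k)"
          proof (cases "k \<in> A")
            case True thus ?thesis using k labA pq'(4) by (simp add: merge_def)
          next
            case False
            hence "lab k \<notin> C" using labD[OF k] by (simp add: D_def)
            thus ?thesis using False k pq'(5) by (simp add: merge_def)
          qed
        qed
        thus "(case pq of (p, q) \<Rightarrow> merge p q) \<in> {j \<in> V \<rightarrow>\<^sub>E {..<\<kappa>}. \<forall>k<n. j (lab k) = (if k \<in> A then a k else b k)}"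
          using mV pq'(1) by simp
      qed
      also have "\<dots> = (\<Sum>p\<in>JC a. FC p * (\<Sum>q\<in>JD b. K (p v) (q w) * FD q))"
        by (simp add: sum.cartesian_product[symmetric] sum_distrib_left ac_simps)
      also have "\<dots> = (\<Sum>s<\<kappa>. \<Sum>p\<in>{p \<in> JC a. p v = s}. FC p * (\<Sum>q\<in>JD b. K (p v) (q w) * FD q))"
        by (rule sum.group[symmetric]) (use finJC vC in \<open>auto simp: JC_def\<close>)
      also have "\<dots> = (\<Sum>s<\<kappa>. (\<Sum>p\<in>{p \<in> JC a. p v = s}. FC p) * (\<Sum>q\<in>JD b. K s (q w) * FD q))"
        by (simp add: sum_distrib_right)
      finally show ?thesis .
    qed
    have entry: "P (flat_idx n A (rs ! x) (cs ! y)) = (\<Sum>s<\<kappa>. Lf x s * Rf s y)"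
      if x: "x < \<kappa> + 1" and y: "y < \<kappa> + 1" for x y
    proof -
      define i where "i = flat_idx n A (rs ! x) (cs ! y)"
      have li: "length i = n" by (simp add: i_def flat_idx_def)
      have ik: "i ! k = (if k \<in> A then (rs ! x) k else (cs ! y) k)" if "k < n" for k
        using that by (simp add: i_def flat_idx_def)
      have nc: "\<not> (\<forall>k<n. i ! k = i ! 0)"
      proof
        assume h: "\<forall>k<n. i ! k = i ! 0"
        have "i = replicate n (i ! 0)"
        proof (rule nth_equalityI)
          show "length i = length (replicate n (i ! 0))" using li by simp
          fix k assume "k < length i"
          thus "i ! k = replicate n (i ! 0) ! k" using h li by (metis nth_replicate)
        qed
        moreover have "flat_idx n A (rs ! x) (cs ! y) \<noteq> replicate n (i ! 0)"
          using nd[unfolded A_def[symmetric], rule_format, OF x y] .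
        ultimately show False unfolding i_def by simp
      qed
      have sets: "{j \<in> V \<rightarrow>\<^sub>E {..<\<kappa>}. \<forall>k<n. j (lab k) = i ! k}
          = {j \<in> V \<rightarrow>\<^sub>E {..<\<kappa>}. \<forall>k<n. j (lab k) = (if k \<in> A then (rs ! x) k else (cs ! y) k)}"
        using ik by (intro Collect_cong conj_cong refl) simp
      have "P i = (1 - \<delta>) * (\<Sum>j\<in>{j \<in> V \<rightarrow>\<^sub>E {..<\<kappa>}. \<forall>k<n. j (lab k) = i ! k}. W j)"
        unfolding P_def GMI_dist_def W_def by (subst if_not_P[OF nc]) simp
      also have "\<dots> = (1 - \<delta>) * (\<Sum>s<\<kappa>. (\<Sum>p\<in>{p \<in> JC (rs ! x). p v = s}. FC p) *
           (\<Sum>q\<in>JD (cs ! y). K s (q w) * FD q))"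
        unfolding sets sumfac ..
      also have "\<dots> = (\<Sum>s<\<kappa>. Lf x s * Rf s y)"
        unfolding Lf_def Rf_def
        by (subst sum_distrib_left) (rule sum.cong[OF refl], rule mult.assoc[symmetric])
      finally show ?thesis unfolding i_def .
    qed
    have "flat_minor n A rs cs P = det (mat (Suc \<kappa>) (Suc \<kappa>) (\<lambda>(x, y). \<Sum>s<\<kappa>. Lf x s * Rf s y))"
      unfolding flat_minor_def lrs lcs
      by (rule arg_cong[where f = det], rule eq_matI) (auto simp: entry)
    also have "\<dots> = 0" by (rule det_low_rank)
    finally show "flat_minor n (side E lab n e v) rs cs (GMI_dist V E lab n \<kappa> r \<delta> \<pi>I \<pi>G M) = 0"
      by (simp add: A_def P_def)
  qed
qed



definition fr :: "nat \<Rightarrow> nat \<Rightarrow> nat \<Rightarrow> nat" where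
  "fr a b = (\<lambda>k. if k = 0 then a else if k = 1 then b else undefined)"
definition gc :: "nat \<Rightarrow> nat \<Rightarrow> nat \<Rightarrow> nat" where
  "gc c d = (\<lambda>k. if k = 2 then c else if k = 3 then d else undefined)"

lemma fr_eq[simp]: "fr a b = fr a' b' \<longleftrightarrow> a = a' \<and> b = b'"
proof
  assume h: "fr a b = fr a' b'"
  have "fr a b 0 = fr a' b' 0" "fr a b 1 = fr a' b' 1" using h by simp_all
  thus "a = a' \<and> b = b'" by (simp add: fr_def)
qed simp

lemma gc_eq[simp]: "gc a b = gc a' b' \<longleftrightarrow> a = a' \<and> b = b'"
proof
  assume h: "gc a b = gc a' b'"
  have "gc a b 2 = gc a' b' 2" "gc a b 3 = gc a' b' 3" using h by simp_all
  thus "a = a' \<and> b = b'" by (simp add: gc_def)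
qed simp

lemma fr_in: "a < 2 \<Longrightarrow> b < 2 \<Longrightarrow> fr a b \<in> {0, 1} \<rightarrow>\<^sub>E {..<2}"
  by (auto simp: fr_def PiE_def extensional_def)

lemma gc_in: "c < 2 \<Longrightarrow> d < 2 \<Longrightarrow> gc c d \<in> ({..<4} - {0, 1}) \<rightarrow>\<^sub>E {..<2}"
  by (auto simp: gc_def PiE_def extensional_def)

lemma flat_fr_gc: "flat_idx 4 {0, 1} (fr a b) (gc c d) = [a, b, c, d]"
  by (simp add: flat_idx_def fr_def gc_def upt_rec)

lemma flat_fr_gc': "flat_idx 4 {0, Suc 0} (fr a b) (gc c d) = [a, b, c, d]"
  using flat_fr_gc by simp

lemma rep4: "replicate 4 s = [s, s, s, s]"
  by (simp add: numeral_eq_Suc)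

lemma less3: "(i::nat) < 3 \<longleftrightarrow> i = 0 \<or> i = 1 \<or> i = 2" by auto

lemma mat3_eq:
  assumes "\<And>i j. i < 3 \<Longrightarrow> j < 3 \<Longrightarrow> f (i, j) = g (i, j)"
  shows "mat 3 3 f = mat 3 3 g"
  by (rule eq_matI) (use assms in auto)

lemma part1_one:
  fixes V :: "'v set" and E lab P
  assumes T: "taxon_tree V E lab 4" and e: "e \<in> E" "v \<in> e" and s: "side E lab 4 e v = {0, 1}"
    and rs: "rs = [fr a1 b1, fr a2 b2, fr a3 b3]" and cs: "cs = [gc c1 d1, gc c2 d2, gc c3 d3]"
    and rng: "a1 < 2" "b1 < 2" "a2 < 2" "b2 < 2" "a3 < 2" "b3 < 2"
             "c1 < 2" "d1 < 2" "c2 < 2" "d2 < 2" "c3 < 2" "d3 < 2"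
    and drs: "distinct rs" and dcs: "distinct cs"
    and nd: "\<forall>x<3. \<forall>y<3. \<forall>s. flat_idx 4 {0, 1} (rs ! x) (cs ! y) \<noteq> replicate 4 s"
    and eq: "\<And>P. F P = flat_minor 4 {0, 1} rs cs P"
  shows "phylo_invariant V E lab 4 2 F"
proof -
  have "phylo_invariant V E lab 4 2 (flat_minor 4 (side E lab 4 e v) rs cs)"
  proof (rule part2)
    show "set rs \<subseteq> side E lab 4 e v \<rightarrow>\<^sub>E {..<2}"
      unfolding s rs using fr_in[OF rng(1,2)] fr_in[OF rng(3,4)] fr_in[OF rng(5,6)] by simp
    show "set cs \<subseteq> ({..<4} - side E lab 4 e v) \<rightarrow>\<^sub>E {..<2}"
      unfolding s cs using gc_in[OF rng(7,8)] gc_in[OF rng(9,10)] gc_in[OF rng(11,12)] by simp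
  qed (use T e dcs nd in \<open>simp_all add: s rs cs\<close>)
  moreover have "F = flat_minor 4 {0, 1} rs cs" using eq by auto
  ultimately show ?thesis using s by simp
qed

lemma part1:
  fixes V :: "'v set" and E lab
  assumes "binary_taxon_tree V E lab 4 \<and> (\<exists>e\<in>E. \<exists>v\<in>e. side E lab 4 e v = {0, 1})"
  shows "phylo_invariant V E lab 4 2 (\<lambda>P. det (mat_of_rows_list 3
           [[P [0,0,0,1], P [0,0,1,0], P [0,0,1,1]],
            [P [0,1,0,1], P [0,1,1,0], P [0,1,1,1]],
            [P [1,0,0,1], P [1,0,1,0], P [1,0,1,1]]]))
      \<and> phylo_invariant V E lab 4 2 (\<lambda>P. det (mat_of_rows_list 3
           [[P [0,1,0,0], P [0,1,0,1], P [0,1,1,0]],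
            [P [1,0,0,0], P [1,0,0,1], P [1,0,1,0]],
            [P [1,1,0,0], P [1,1,0,1], P [1,1,1,0]]]))"
proof -
  have T: "taxon_tree V E lab 4" using assms by (simp add: binary_taxon_tree_def)
  obtain e v where e: "e \<in> E" "v \<in> e" and s: "side E lab 4 e v = {0, 1}" using assms by blast
  show ?thesis
  proof
    show "phylo_invariant V E lab 4 2 (\<lambda>P. det (mat_of_rows_list 3
           [[P [0,0,0,1], P [0,0,1,0], P [0,0,1,1]],
            [P [0,1,0,1], P [0,1,1,0], P [0,1,1,1]],
            [P [1,0,0,1], P [1,0,1,0], P [1,0,1,1]]]))"
    proof (rule part1_one[OF T e s refl refl, of 0 0 0 1 1 0 0 1 1 0 1 1])
      fix P :: "nat list \<Rightarrow> real"
      show "det (mat_of_rows_list 3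
           [[P [0,0,0,1], P [0,0,1,0], P [0,0,1,1]],
            [P [0,1,0,1], P [0,1,1,0], P [0,1,1,1]],
            [P [1,0,0,1], P [1,0,1,0], P [1,0,1,1]]]) =
        flat_minor 4 {0, 1} [fr 0 0, fr 0 1, fr 1 0] [gc 0 1, gc 1 0, gc 1 1] P"
      proof -
        have l: "length ([[P [0,0,0,1], P [0,0,1,0], P [0,0,1,1]],
              [P [0,1,0,1], P [0,1,1,0], P [0,1,1,1]],
              [P [1,0,0,1], P [1,0,1,0], P [1,0,1,1]]]) = 3" "length [fr 0 0, fr 0 1, fr 1 0] = 3" "length [gc 0 1, gc 1 0, gc 1 1] = 3" by simp_all
        show ?thesis unfolding flat_minor_def mat_of_rows_list_def l
          by (rule arg_cong[where f = det], rule mat3_eq) (auto simp: less3 flat_fr_gc flat_fr_gc')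
      qed
    qed (auto simp: less3 flat_fr_gc flat_fr_gc' rep4)
    show "phylo_invariant V E lab 4 2 (\<lambda>P. det (mat_of_rows_list 3
           [[P [0,1,0,0], P [0,1,0,1], P [0,1,1,0]],
            [P [1,0,0,0], P [1,0,0,1], P [1,0,1,0]],
            [P [1,1,0,0], P [1,1,0,1], P [1,1,1,0]]]))"
    proof (rule part1_one[OF T e s refl refl, of 0 1 1 0 1 1 0 0 0 1 1 0])
      fix P :: "nat list \<Rightarrow> real"
      show "det (mat_of_rows_list 3
           [[P [0,1,0,0], P [0,1,0,1], P [0,1,1,0]],
            [P [1,0,0,0], P [1,0,0,1], P [1,0,1,0]],
            [P [1,1,0,0], P [1,1,0,1], P [1,1,1,0]]]) =
        flat_minor 4 {0, 1} [fr 0 1, fr 1 0, fr 1 1] [gc 0 0, gc 0 1, gc 1 0] P"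
      proof -
        have l: "length ([[P [0,1,0,0], P [0,1,0,1], P [0,1,1,0]],
              [P [1,0,0,0], P [1,0,0,1], P [1,0,1,0]],
              [P [1,1,0,0], P [1,1,0,1], P [1,1,1,0]]]) = 3" "length [fr 0 1, fr 1 0, fr 1 1] = 3" "length [gc 0 0, gc 0 1, gc 1 0] = 3" by simp_all
        show ?thesis unfolding flat_minor_def mat_of_rows_list_def l
          by (rule arg_cong[where f = det], rule mat3_eq) (auto simp: less3 flat_fr_gc flat_fr_gc')
      qed
    qed (auto simp: less3 flat_fr_gc flat_fr_gc' rep4)
  qed
qed

theorem proposition5:
  shows
  "(\<forall>(V :: 'v set) E lab.
      binary_taxon_tree V E lab 4 \<and> (\<exists>e\<in>E. \<exists>v\<in>e. side E lab 4 e v = {0, 1}) \<longrightarrow>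
        phylo_invariant V E lab 4 2 (\<lambda>P. det (mat_of_rows_list 3
           [[P [0,0,0,1], P [0,0,1,0], P [0,0,1,1]],
            [P [0,1,0,1], P [0,1,1,0], P [0,1,1,1]],
            [P [1,0,0,1], P [1,0,1,0], P [1,0,1,1]]]))
      \<and> phylo_invariant V E lab 4 2 (\<lambda>P. det (mat_of_rows_list 3
           [[P [0,1,0,0], P [0,1,0,1], P [0,1,1,0]],
            [P [1,0,0,0], P [1,0,0,1], P [1,0,1,0]],
            [P [1,1,0,0], P [1,1,0,1], P [1,1,1,0]]])))
   \<and>
   (\<forall>(V :: 'w set) E lab n \<kappa> e v rs cs.
      n \<ge> 4 \<and> \<kappa> \<ge> 2 \<and> taxon_tree V E lab n \<and> e \<in> E \<and> v \<in> e
      \<and> length rs = \<kappa> + 1 \<and> distinct rs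
      \<and> set rs \<subseteq> side E lab n e v \<rightarrow>\<^sub>E {..<\<kappa>}
      \<and> length cs = \<kappa> + 1 \<and> distinct cs
      \<and> set cs \<subseteq> ({..<n} - side E lab n e v) \<rightarrow>\<^sub>E {..<\<kappa>}
      \<and> (\<forall>x<\<kappa>+1. \<forall>y<\<kappa>+1. \<forall>s.
            flat_idx n (side E lab n e v) (rs ! x) (cs ! y) \<noteq> replicate n s)
      \<longrightarrow> phylo_invariant V E lab n \<kappa> (flat_minor n (side E lab n e v) rs cs))"
proof (intro conjI allI impI)
  fix V :: "'v set" and E lab
  assume h: "binary_taxon_tree V E lab 4 \<and> (\<exists>e\<in>E. \<exists>v\<in>e. side E lab 4 e v = {0, 1})"
  show "phylo_invariant V E lab 4 2 (\<lambda>P. det (mat_of_rows_list 3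
           [[P [0,0,0,1], P [0,0,1,0], P [0,0,1,1]],
            [P [0,1,0,1], P [0,1,1,0], P [0,1,1,1]],
            [P [1,0,0,1], P [1,0,1,0], P [1,0,1,1]]]))"
    using part1[OF h] by blast
  show "phylo_invariant V E lab 4 2 (\<lambda>P. det (mat_of_rows_list 3
           [[P [0,1,0,0], P [0,1,0,1], P [0,1,1,0]],
            [P [1,0,0,0], P [1,0,0,1], P [1,0,1,0]],
            [P [1,1,0,0], P [1,1,0,1], P [1,1,1,0]]]))"
    using part1[OF h] by blast
next
  fix V :: "'w set" and E lab n \<kappa> e v rs cs
  assume h: "n \<ge> 4 \<and> \<kappa> \<ge> 2 \<and> taxon_tree V E lab n \<and> e \<in> E \<and> v \<in> e
      \<and> length rs = \<kappa> + 1 \<and> distinct rs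
      \<and> set rs \<subseteq> side E lab n e v \<rightarrow>\<^sub>E {..<\<kappa>}
      \<and> length cs = \<kappa> + 1 \<and> distinct cs
      \<and> set cs \<subseteq> ({..<n} - side E lab n e v) \<rightarrow>\<^sub>E {..<\<kappa>}
      \<and> (\<forall>x<\<kappa>+1. \<forall>y<\<kappa>+1. \<forall>s.
            flat_idx n (side E lab n e v) (rs ! x) (cs ! y) \<noteq> replicate n s)"
  show "phylo_invariant V E lab n \<kappa> (flat_minor n (side E lab n e v) rs cs)"
    by (rule part2) (use h in blast)+
qed

end
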